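(* Let $n,R\in\mathbb N$, $x_1,\dots,x_n\in X$, $\lambda>0$, $\tau\in(0,1]$. Let $u_1,\dots,u_R$ be i.i.d. uniform on $[n]$. If $$R\ge\frac{16n\kappa^2}{\lambda n+\kappa^2}\log\frac{4n}{\tau},$$ then with probability at least $1-\tau$, $$\frac nR\sum_{i=1}^R\widehat\ell(x_{u_i},\lambda)<\max\Big(5,\ \frac65\,d_{\mathrm{eff}}(\lambda)\Big).$$
   Context: Let $X$ be a Polish space and $K:X\times X\to\mathbb R$ a continuous positive semidefinite kernel with RKHS $\mathcal H$, $K_x=K(x,\cdot)$, and $K(x,x)\le\kappa^2$ for all $x$ ($\kappa>0$). For $f,g\in\mathcal H$, $f\otimes g$ denotes $h\mapsto\langle g,h\rangle_{\mathcal H}f$. $[n]=\{1,\dots,n\}$, $\widehat C=\frac1n\sum_{i=1}^nK_{x_i}\otimes K_{x_i}$, $\widehat\ell(x,\lambda)=\frac1n\|(\widehat C+\lambda I)^{-1/2}K_x\|^2_{\mathcal H}$, and $d_{\mathrm{eff}}(\lambda)=\sum_{i=1}^n\widehat\ell(x_i,\lambda)$ (equivalently the trace of $\widehat K(\widehat K+\lambda nI)^{-1}$ with $\widehat K_{ij}=K(x_i,x_j)$). *)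

theory Defs
  imports "HOL-Analysis.Analysis" "HOL-Probability.Probability"
begin

text \<open>The RKHS is represented by a real Hilbert space 'h with feature map phi,
  K x = phi x, K(x,y) = inner (phi x) (phi y), and span (range phi) dense.\<close>

definition emp_cov :: "('x \<Rightarrow> 'h::real_inner) \<Rightarrow> (nat \<Rightarrow> 'x) \<Rightarrow> nat \<Rightarrow> 'h \<Rightarrow> 'h" where
  "emp_cov phi xs n h = (1 / real n) *\<^sub>R (\<Sum>i=1..n. inner (phi (xs i)) h *\<^sub>R phi (xs i))"

definition reg_inv :: "('x \<Rightarrow> 'h::real_inner) \<Rightarrow> (nat \<Rightarrow> 'x) \<Rightarrow> nat \<Rightarrow> real \<Rightarrow> 'h \<Rightarrow> 'h" where
  "reg_inv phi xs n lam v = (THE w. emp_cov phi xs n w + lam *\<^sub>R w = v)"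

text \<open>Empirical leverage score
  l(x,lambda) = (1/n) ||(C+lambda I)^{-1/2} K_x||^2 = (1/n) <K_x, (C+lambda I)^{-1} K_x>.\<close>
definition lev :: "('x \<Rightarrow> 'h::real_inner) \<Rightarrow> (nat \<Rightarrow> 'x) \<Rightarrow> nat \<Rightarrow> real \<Rightarrow> 'x \<Rightarrow> real" where
  "lev phi xs n lam x = (1 / real n) * inner (phi x) (reg_inv phi xs n lam (phi x))"

definition d_eff :: "('x \<Rightarrow> 'h::real_inner) \<Rightarrow> (nat \<Rightarrow> 'x) \<Rightarrow> nat \<Rightarrow> real \<Rightarrow> real" where
  "d_eff phi xs n lam = (\<Sum>i=1..n. lev phi xs n lam (xs i))"

end

theory Submission
  imports Defs
begin

definition Aop :: "('x \<Rightarrow> 'h::real_inner) \<Rightarrow> (nat \<Rightarrow> 'x) \<Rightarrow> nat \<Rightarrow> real \<Rightarrow> nat \<Rightarrow> 'h \<Rightarrow> 'h" where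
  "Aop phi xs n lam m w = lam *\<^sub>R w + (1 / real n) *\<^sub>R (\<Sum>i=1..m. inner (phi (xs i)) w *\<^sub>R phi (xs i))"

lemma Aop_diff: "Aop phi xs n lam m (a - b) = Aop phi xs n lam m a - Aop phi xs n lam m b"
  unfolding Aop_def by (simp add: inner_diff_right scaleR_diff_left sum_subtractf algebra_simps)

lemma Aop_scale: "Aop phi xs n lam m (c *\<^sub>R a) = c *\<^sub>R Aop phi xs n lam m a"
  unfolding Aop_def by (simp add: scaleR_sum_right algebra_simps)

lemma Aop_inner: "inner (Aop phi xs n lam m u) u = lam * inner u u + (1 / real n) * (\<Sum>i=1..m. (inner (phi (xs i)) u)\<^sup>2)"
  unfolding Aop_def by (simp add: inner_add_left inner_sum_left power2_eq_square sum_divide_distrib)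

lemma Aop_inner_nonneg: "lam \<ge> 0 \<Longrightarrow> inner (Aop phi xs n lam m u) u \<ge> 0"
  unfolding Aop_inner by (intro add_nonneg_nonneg mult_nonneg_nonneg sum_nonneg) auto

lemma Aop_Suc: "Aop phi xs n lam (Suc m) w = Aop phi xs n lam m w + (1 / real n * inner (phi (xs (Suc m))) w) *\<^sub>R phi (xs (Suc m))"
  unfolding Aop_def by (simp add: algebra_simps)

lemma Aop_surj:
  assumes "lam > 0" "n > 0"
  shows "\<exists>w. Aop phi xs n lam m w = v"
  using assms(1) proof (induction m arbitrary: v)
  case 0
  have "Aop phi xs n lam 0 ((1/lam) *\<^sub>R v) = v" using assms unfolding Aop_def by simp
  then show ?case by blast
next
  case (Suc m)
  define f where "f = phi (xs (Suc m))"
  obtain a where a: "Aop phi xs n lam m a = v" using Suc by blast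
  obtain g where g: "Aop phi xs n lam m g = f" using Suc by blast
  define \<gamma> where "\<gamma> = inner f g"
  have "\<gamma> \<ge> 0" unfolding \<gamma>_def using Aop_inner_nonneg[of lam phi xs n m g] g assms by simp
  define \<beta> where "\<beta> = inner f a / (real n + \<gamma>)"
  have npos: "real n + \<gamma> > 0" using \<open>\<gamma> \<ge> 0\<close> assms by simp
  define w where "w = a - \<beta> *\<^sub>R g"
  have iw: "inner f w = \<beta> * real n"
  proof -
    have "inner f w = inner f a - \<beta> * \<gamma>" unfolding w_def \<gamma>_def by (simp add: inner_diff_right)
    also have "inner f a = \<beta> * (real n + \<gamma>)" unfolding \<beta>_def using npos by simp
    finally show ?thesis by (simp add: algebra_simps)
  qed
  have am: "Aop phi xs n lam m w = v - \<beta> *\<^sub>R f" unfolding w_def by (simp add: Aop_diff Aop_scale a g)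
  have "Aop phi xs n lam (Suc m) w = v"
    unfolding Aop_Suc f_def[symmetric] am iw using assms by simp
  then show ?case by blast
qed

lemma Aop_inj:
  assumes "lam > 0" "Aop phi xs n lam m w1 = Aop phi xs n lam m w2"
  shows "w1 = w2"
proof -
  have z: "Aop phi xs n lam m (w1 - w2) = 0" using assms by (simp add: Aop_diff)
  have "0 = inner (Aop phi xs n lam m (w1 - w2)) (w1 - w2)" using z by simp
  also have "\<dots> \<ge> lam * inner (w1 - w2) (w1 - w2)"
    unfolding Aop_inner by (intro add_increasing2 mult_nonneg_nonneg sum_nonneg) auto
  finally have "inner (w1 - w2) (w1 - w2) \<le> 0" using assms(1)
    by (simp add: mult_le_0_iff)
  hence "inner (w1 - w2) (w1 - w2) = 0" using inner_ge_zero[of "w1 - w2"] by linarith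
  then show ?thesis by simp
qed

lemma emp_cov_Aop: "emp_cov phi xs n w + lam *\<^sub>R w = Aop phi xs n lam n w"
  unfolding emp_cov_def Aop_def by simp

lemma reg_inv_eq:
  assumes "lam > 0" "n > 0"
  shows "Aop phi xs n lam n (reg_inv phi xs n lam v) = v"
proof -
  have "\<exists>!w. emp_cov phi xs n w + lam *\<^sub>R w = v"
    unfolding emp_cov_Aop using Aop_surj[OF assms] Aop_inj[OF assms(1)] by metis
  from theI'[OF this] show ?thesis unfolding reg_inv_def emp_cov_Aop .
qed

lemma lev_bounds:
  fixes phi :: "'x \<Rightarrow> 'h::real_inner"
  assumes "lam > 0" "n > 0" "i \<in> {1..n}" "inner (phi (xs i)) (phi (xs i)) \<le> k2" "k2 > 0"
  shows "0 \<le> inner (phi (xs i)) (reg_inv phi xs n lam (phi (xs i)))"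
    "inner (phi (xs i)) (reg_inv phi xs n lam (phi (xs i))) \<le> real n * k2 / (lam * real n + k2)"
proof -
  define w where "w = reg_inv phi xs n lam (phi (xs i))"
  define a where "a = inner (phi (xs i)) w"
  have "a = inner (Aop phi xs n lam n w) w" unfolding a_def w_def reg_inv_eq[OF assms(1,2)] by simp
  also have "\<dots> = lam * inner w w + (1 / real n) * (\<Sum>j=1..n. (inner (phi (xs j)) w)\<^sup>2)"
    by (rule Aop_inner)
  finally have aeq: "a = \<dots>" .
  have "(inner (phi (xs i)) w)\<^sup>2 \<le> (\<Sum>j=1..n. (inner (phi (xs j)) w)\<^sup>2)"
    using assms(3) by (intro member_le_sum[where f="\<lambda>j. (inner (phi (xs j)) w)\<^sup>2"]) auto
  hence s: "a\<^sup>2 \<le> (\<Sum>j=1..n. (inner (phi (xs j)) w)\<^sup>2)" unfolding a_def .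
  have cs: "a\<^sup>2 \<le> inner (phi (xs i)) (phi (xs i)) * inner w w"
    unfolding a_def by (rule Cauchy_Schwarz_ineq)
  also have "\<dots> \<le> k2 * inner w w" using assms(4) by (intro mult_right_mono) auto
  finally have cs2: "a\<^sup>2 / k2 \<le> inner w w" using assms(5) by (simp add: field_simps)
  have "lam * (a\<^sup>2 / k2) + (1 / real n) * a\<^sup>2 \<le> lam * inner w w + (1 / real n) * (\<Sum>j=1..n. (inner (phi (xs j)) w)\<^sup>2)"
    using s cs2 assms(1,2) by (intro add_mono mult_left_mono) auto
  hence "a \<ge> lam * (a\<^sup>2 / k2) + (1 / real n) * a\<^sup>2" using aeq by linarith
  hence key: "a \<ge> a\<^sup>2 * ((lam * real n + k2) / (real n * k2))"
    using assms by (simp add: field_simps)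
  have q: "(lam * real n + k2) / (real n * k2) > 0" using assms by (intro divide_pos_pos add_pos_pos mult_pos_pos) auto
  show "0 \<le> inner (phi (xs i)) (reg_inv phi xs n lam (phi (xs i)))"
    using key q unfolding a_def[symmetric] w_def[symmetric]
    by (smt (verit) mult_nonneg_nonneg zero_le_power2)
  have "a \<le> real n * k2 / (lam * real n + k2)"
  proof (cases "a > 0")
    case True
    from key have "a * (a * ((lam * real n + k2) / (real n * k2))) \<le> a * 1"
      by (simp add: power2_eq_square algebra_simps)
    hence "a * ((lam * real n + k2) / (real n * k2)) \<le> 1" using True by (rule mult_left_le_imp_le)
    then show ?thesis using q assms by (simp add: field_simps)
  next
    case False then show ?thesis using assms by (smt (verit) divide_nonneg_pos mult_nonneg_nonneg of_nat_0_le_iff)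
  qed
  then show "inner (phi (xs i)) (reg_inv phi xs n lam (phi (xs i))) \<le> real n * k2 / (lam * real n + k2)"
    by (simp add: a_def w_def)
qed

lemma exp_c_le: "exp (9/50 :: real) \<le> 6/5"
proof -
  have "exp (9/50 :: real) = exp (9/400) ^ 8" by (subst exp_of_nat_mult[symmetric]) simp
  also have "\<dots> \<le> (1 + 9/400 + (9/400)\<^sup>2) ^ 8"
    by (intro power_mono exp_bound) auto
  also have "\<dots> \<le> 6/5" by (simp add: power2_eq_square power_divide)
  finally show ?thesis .
qed

lemma exp_conv_bound:
  fixes M y :: real
  assumes "M > 0" "0 \<le> y" "y \<le> M"
  shows "exp ((9/50) / M * y) \<le> 1 + y / (5 * M)"
proof -
  define s where "s = y / M"
  have s01: "0 \<le> s" "s \<le> 1" using assms unfolding s_def by auto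
  have "exp ((9/50) * ((1 - s) *\<^sub>R 0 + s *\<^sub>R 1)) \<le> (1 - s) * exp ((9/50) * 0) + s * exp ((9/50) * (1::real))"
    by (rule convex_onD[OF convex_on_exp]) (use s01 in auto)
  hence "exp ((9/50) * s) \<le> (1 - s) + s * exp (9/50)" by simp
  also have "\<dots> \<le> (1 - s) + s * (6/5)" using exp_c_le s01 by (intro add_left_mono mult_left_mono) auto
  finally have "exp ((9/50) * s) \<le> 1 + s / 5" by simp
  moreover have "(9/50) / M * y = (9/50) * s" unfolding s_def by simp
  moreover have "s / 5 = y / (5 * M)" unfolding s_def by simp
  ultimately show ?thesis by metis
qed

lemma chernoff_main:
  fixes q :: "nat \<Rightarrow> real" and n R :: nat and M :: real
  assumes n: "n \<ge> 1" and R: "R > 0" and M: "M > 0"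
    and qb: "\<And>j. j \<in> {1..n} \<Longrightarrow> 0 \<le> q j \<and> q j \<le> M"
    and b5: "b \<ge> 5" and bmu: "b \<ge> 6/5 * ((\<Sum>j=1..n. q j) / real n)"
  shows "measure_pmf.prob (Pi_pmf {1..R} 0 (\<lambda>_. pmf_of_set {1..n}))
           {u. (\<Sum>i=1..R. q (u i)) \<ge> real R * b} \<le> exp (- (real R / M) / 16)"
proof -
  define P where "P = Pi_pmf {1..R} 0 (\<lambda>_. pmf_of_set {1..n::nat})"
  define t where "t = (9/50) / M"
  define mu where "mu = (\<Sum>j=1..n. q j) / real n"
  define Z where "Z = (\<lambda>u::nat\<Rightarrow>nat. \<Prod>i\<in>{1..R}. exp (t * q (u i)))"
  define E1 where "E1 = measure_pmf.expectation (pmf_of_set {1..n}) (\<lambda>j. exp (t * q j))"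
  have t: "t > 0" unfolding t_def using M by simp
  have ne: "{1..n} \<noteq> {}" using n by simp
  have Zexp: "Z u = exp (t * (\<Sum>i=1..R. q (u i)))" for u
    unfolding Z_def by (simp add: exp_sum sum_distrib_left)
  have sub: "{u. (\<Sum>i=1..R. q (u i)) \<ge> real R * b} \<subseteq> {u \<in> space (measure_pmf P). Z u \<ge> exp (t * (real R * b))}"
    using t by (auto simp: Zexp)
  have int1: "integrable (measure_pmf (pmf_of_set {1..n})) (\<lambda>j. exp (t * q j))"
    using ne by (intro integrable_measure_pmf_finite) auto
  have intZ: "integrable (measure_pmf P) Z"
    unfolding P_def Z_def by (intro integrable_prod_Pi_pmf int1) auto
  have EZ: "measure_pmf.expectation P Z = E1 ^ R"
    unfolding P_def Z_def E1_def
    by (subst expectation_prod_Pi_pmf) (use int1 in auto)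
  have "E1 = (\<Sum>j\<in>{1..n}. exp (t * q j)) / real n"
    unfolding E1_def using ne by (subst integral_pmf_of_set) auto
  also have "\<dots> \<le> (\<Sum>j\<in>{1..n}. 1 + q j / (5 * M)) / real n"
    using n qb M unfolding t_def
    by (intro divide_right_mono sum_mono exp_conv_bound) auto
  also have "\<dots> = 1 + mu / (5 * M)"
    using n unfolding mu_def by (simp add: sum.distrib sum_divide_distrib[symmetric] field_simps)
  also have "\<dots> \<le> exp (mu / (5 * M))" by (rule exp_ge_add_one_self)
  finally have E1le: "E1 \<le> exp (mu / (5 * M))" .
  have E1ge: "E1 \<ge> 0" unfolding E1_def by (intro Bochner_Integration.integral_nonneg_AE) auto
  have "measure_pmf.prob P {u. (\<Sum>i=1..R. q (u i)) \<ge> real R * b}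
        \<le> measure_pmf.prob P {u \<in> space (measure_pmf P). Z u \<ge> exp (t * (real R * b))}"
    by (rule measure_pmf.finite_measure_mono[OF sub]) auto
  also have "\<dots> \<le> measure_pmf.expectation P Z / exp (t * (real R * b))"
    by (rule integral_Markov_inequality_measure[OF intZ]) (auto simp: Z_def intro!: prod_nonneg)
  also have "\<dots> \<le> exp (mu / (5 * M)) ^ R / exp (t * (real R * b))"
    unfolding EZ by (intro divide_right_mono power_mono E1le E1ge) auto
  also have "\<dots> = exp (real R * (mu / (5 * M)) - t * (real R * b))"
    by (simp add: exp_diff exp_of_nat_mult[symmetric])
  also have "\<dots> \<le> exp (- (real R / M) / 16)"
  proof -
    have "mu \<le> 5/6 * b" using bmu unfolding mu_def by linarith
    hence "(9/50) * b - mu / 5 \<ge> 1/16" using b5 by simp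
    hence "(real R / M) * ((9/50) * b - mu / 5) \<ge> (real R / M) * (1/16)"
      using R M by (intro mult_left_mono) auto
    moreover have "real R * (mu / (5 * M)) - t * (real R * b) = - ((real R / M) * ((9/50) * b - mu / 5))"
      unfolding t_def using M by (simp add: field_simps)
    ultimately have "real R * (mu / (5 * M)) - t * (real R * b) \<le> - (real R / M) / 16"
      by linarith
    then show ?thesis by simp
  qed
  finally show ?thesis unfolding P_def .
qed


theorem mainTheorem10:
  fixes K :: "'x::polish_space \<Rightarrow> 'x \<Rightarrow> real"
    and phi :: "'x \<Rightarrow> 'h::{real_inner, complete_space}"
    and xs :: "nat \<Rightarrow> 'x"
    and n R :: nat and lam tau kappa :: real
  assumes feature: "\<And>x y. K x y = inner (phi x) (phi y)"
    and dense: "closure (span (range phi)) = UNIV"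
    and cont: "continuous_on UNIV (\<lambda>p. K (fst p) (snd p))"
    and kappa_pos: "kappa > 0"
    and bounded: "\<And>x. K x x \<le> kappa\<^sup>2"
    and n_pos: "n \<ge> 1"
    and lam_pos: "lam > 0"
    and tau: "0 < tau" "tau \<le> 1"
    and R_large: "real R \<ge> 16 * real n * kappa\<^sup>2 / (lam * real n + kappa\<^sup>2) * ln (4 * real n / tau)"
  shows "measure_pmf.prob (Pi_pmf {1..R} 0 (\<lambda>_. pmf_of_set {1..n}))
           {u. real n / real R * (\<Sum>i=1..R. lev phi xs n lam (xs (u i)))
                 < max 5 (6/5 * d_eff phi xs n lam)} \<ge> 1 - tau"
proof -
  define P where "P = Pi_pmf {1..R} 0 (\<lambda>_. pmf_of_set {1..n::nat})"
  define q where "q = (\<lambda>j. inner (phi (xs j)) (reg_inv phi xs n lam (phi (xs j))))"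
  define M where "M = real n * kappa\<^sup>2 / (lam * real n + kappa\<^sup>2)"
  define L where "L = ln (4 * real n / tau)"
  define b where "b = max 5 (6/5 * d_eff phi xs n lam)"
  have n0: "n > 0" using n_pos by simp
  have k2: "kappa\<^sup>2 > 0" using kappa_pos by simp
  have Mpos: "M > 0" unfolding M_def using n0 k2 lam_pos by (intro divide_pos_pos mult_pos_pos add_pos_pos) auto
  have qb: "0 \<le> q j \<and> q j \<le> M" if "j \<in> {1..n}" for j
  proof -
    have kk: "inner (phi (xs j)) (phi (xs j)) \<le> kappa\<^sup>2" using bounded[of "xs j"] unfolding feature .
    show ?thesis using lev_bounds[where phi=phi and xs=xs and i=j, OF lam_pos n0 that kk k2] unfolding q_def M_def by auto
  qed
  have levq: "lev phi xs n lam (xs j) = q j / real n" for j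
    unfolding lev_def q_def by simp
  have deff: "d_eff phi xs n lam = (\<Sum>j=1..n. q j) / real n"
    unfolding d_eff_def levq by (simp add: sum_divide_distrib)
  have Lpos: "L > 0" unfolding L_def using tau n_pos by (intro ln_gt_zero) (auto simp: field_simps)
  have RL: "real R \<ge> 16 * M * L" using R_large unfolding M_def L_def by simp
  hence Rpos: "R > 0" using Mpos Lpos
    by (metis mult_pos_pos not_le of_nat_0_less_iff zero_less_numeral order.strict_trans1)
  have bad: "measure_pmf.prob P {u. (\<Sum>i=1..R. q (u i)) \<ge> real R * b} \<le> exp (- (real R / M) / 16)"
    unfolding P_def
    by (rule chernoff_main[OF n_pos Rpos Mpos qb]) (auto simp: b_def deff)
  have "exp (- (real R / M) / 16) \<le> exp (- L)"
    using RL Mpos by (simp add: field_simps)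
  also have "exp (- L) = tau / (4 * real n)"
    unfolding L_def using tau n0 by (simp add: exp_minus exp_ln)
  also have "\<dots> \<le> tau" using tau n_pos by (simp add: field_simps)
  finally have badle: "measure_pmf.prob P {u. (\<Sum>i=1..R. q (u i)) \<ge> real R * b} \<le> tau"
    using bad by linarith
  have seteq: "{u. real n / real R * (\<Sum>i=1..R. lev phi xs n lam (xs (u i))) < b}
      = space (measure_pmf P) - {u. (\<Sum>i=1..R. q (u i)) \<ge> real R * b}"
  proof -
    have eq1: "real n / real R * (\<Sum>i=1..R. lev phi xs n lam (xs (u i))) = (\<Sum>i=1..R. q (u i)) / real R" for u
      unfolding levq using n0 by (simp add: sum_divide_distrib[symmetric])
    have eq2: "(s / real R < b) \<longleftrightarrow> \<not> (s \<ge> real R * b)" for s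
      using Rpos by (simp add: divide_less_eq mult.commute not_le)
    show ?thesis
    proof (intro set_eqI)
      fix u :: "nat \<Rightarrow> nat"
      have "real n / real R * (\<Sum>i=1..R. lev phi xs n lam (xs (u i))) < b \<longleftrightarrow> (\<Sum>i=1..R. q (u i)) / real R < b"
        by (simp only: eq1)
      also have "\<dots> \<longleftrightarrow> \<not> ((\<Sum>i=1..R. q (u i)) \<ge> real R * b)" by (rule eq2)
      finally show "u \<in> {u. real n / real R * (\<Sum>i=1..R. lev phi xs n lam (xs (u i))) < b} \<longleftrightarrow>
          u \<in> space (measure_pmf P) - {u. (\<Sum>i=1..R. q (u i)) \<ge> real R * b}" by simp
    qed
  qed
  have "measure_pmf.prob P {u. real n / real R * (\<Sum>i=1..R. lev phi xs n lam (xs (u i))) < b}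
     = 1 - measure_pmf.prob P {u. (\<Sum>i=1..R. q (u i)) \<ge> real R * b}"
    unfolding seteq by (rule measure_pmf.prob_compl) auto
  then show ?thesis using badle unfolding P_def b_def by linarith
qed

end
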